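(* Assume Assumptions 1, 2 and 3 (stated in the context). Fix a triple $(i,j,k)$ and an interval $[T_0,T_1]\subseteq[0,T]$ with $T_0<T_1$, and let $\theta$ range over parameters for which $\bar{\mathcal{P}}_{ijk}(T_0,T_1,\theta)$ is defined. If $\theta$ varies so that for some $t\in[T_0,T_1]$ one has $\text{dist}(b_{ij}(t,\theta),o_k)\to d_0$, then $\bar{\mathcal{P}}_{ijk}(T_0,T_1,\theta)\to\infty$.
   Context: An articulated robot consists of finitely many rigid bodies. For a finite-dimensional trajectory parameter vector $\theta$ and $t\in[0,T]$, the $i$-th body occupies $b_i(t,\theta)\subset\mathbb{R}^3$; obstacles occupy $o\subset\mathbb{R}^3$; $d_0\ge0$ is a safe distance; $\text{dist}(A,B)$ is the shortest Euclidean distance between sets. Assumption 1: there are finite decompositions $b_i(t,\theta)=\bigcup_j b_{ij}(t,\theta)$, $o=\bigcup_k o_k$ such that each $(t,\theta)\mapsto\text{dist}(b_{ij}(t,\theta),o_k)$ is sufficiently smooth. Assumption 2: the feasible domain of $t$ and $\theta$ is bounded. Assumption 3: $\mathcal{P}$ is a sufficiently smooth, monotonically decreasing function on $(0,\infty)$ with $\lim_{x\to0}\mathcal{P}(x)=\infty$, $\lim_{x\to\infty}\mathcal{P}(x)=0$, and $\lim_{x\to0}x\mathcal{P}(x)=\infty$. Define $\mathcal{P}_{ijk}(t,\theta)=\mathcal{P}(\text{dist}(b_{ij}(t,\theta),o_k)-d_0)$ and $\bar{\mathcal{P}}_{ijk}(T_0,T_1,\theta)=\int_{T_0}^{T_1}\mathcal{P}_{ijk}(t,\theta)\,dt$.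 *)

theory Defs
  imports "HOL-Analysis.Analysis"
begin

definition penalty_assm :: "(real \<Rightarrow> real) \<Rightarrow> bool" where
  "penalty_assm P \<longleftrightarrow>
     (\<exists>P'. (\<forall>x>0. (P has_real_derivative P' x) (at x)) \<and> continuous_on {0<..} P') \<and>
     (\<forall>x y. 0 < x \<longrightarrow> x \<le> y \<longrightarrow> P y \<le> P x) \<and>
     filterlim P at_top (at_right 0) \<and>
     (P \<longlongrightarrow> 0) at_top \<and>
     filterlim (\<lambda>x. x * P x) at_top (at_right 0)"

text \<open>The penalty of piece b (= b_ij) against obstacle piece obs (= o_k) at time t, parameter th.\<close>
definition Pijk :: "(real \<Rightarrow> real) \<Rightarrow> real \<Rightarrow> (real \<Rightarrow> 'a \<Rightarrow> (real^3) set) \<Rightarrow> (real^3) set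
                    \<Rightarrow> real \<Rightarrow> 'a \<Rightarrow> real" where
  "Pijk P d0 b obs t th = P (setdist (b t th) obs - d0)"

definition barPijk :: "(real \<Rightarrow> real) \<Rightarrow> real \<Rightarrow> (real \<Rightarrow> 'a \<Rightarrow> (real^3) set) \<Rightarrow> (real^3) set
                    \<Rightarrow> real \<Rightarrow> real \<Rightarrow> 'a \<Rightarrow> real" where
  "barPijk P d0 b obs T0 T1 th = integral {T0..T1} (\<lambda>t. Pijk P d0 b obs t th)"

definition barPijk_defined :: "(real \<Rightarrow> real) \<Rightarrow> real \<Rightarrow> (real \<Rightarrow> 'a \<Rightarrow> (real^3) set) \<Rightarrow> (real^3) set
                    \<Rightarrow> real \<Rightarrow> real \<Rightarrow> 'a \<Rightarrow> bool" where
  "barPijk_defined P d0 b obs T0 T1 th \<longleftrightarrow>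
     (\<forall>t\<in>{T0..T1}. setdist (b t th) obs > d0) \<and>
     (\<lambda>t. Pijk P d0 b obs t th) integrable_on {T0..T1}"

end

theory Submission
  imports Defs
begin

theorem lemma2:
  fixes P :: "real \<Rightarrow> real" and d0 T T0 T1 :: real
    and b :: "real \<Rightarrow> 'a::euclidean_space \<Rightarrow> (real^3) set" and obs :: "(real^3) set"
    and Theta :: "'a set" and U :: "(real \<times> 'a) set"
    and Dd :: "real \<times> 'a \<Rightarrow> (real \<times> 'a) \<Rightarrow>\<^sub>L real"
    and th :: "nat \<Rightarrow> 'a" and t :: "nat \<Rightarrow> real"
  assumes d0: "d0 \<ge> 0"
    and A1_open: "open U" and A1_dom: "{0..T} \<times> closure Theta \<subseteq> U"
    and A1_deriv: "\<And>z. z \<in> U \<Longrightarrow>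
          ((\<lambda>(s, p). setdist (b s p) obs) has_derivative blinfun_apply (Dd z)) (at z)"
    and A1_cont: "continuous_on U Dd"
    and A2: "bounded Theta"
    and A3: "penalty_assm P"
    and T01: "0 \<le> T0" "T0 < T1" "T1 \<le> T"
    and th_dom: "\<And>n. th n \<in> Theta"
    and th_def: "\<And>n. barPijk_defined P d0 b obs T0 T1 (th n)"
    and t_in: "\<And>n. t n \<in> {T0..T1}"
    and lim: "(\<lambda>n. setdist (b (t n) (th n)) obs) \<longlonglongrightarrow> d0"
  shows "filterlim (\<lambda>n. barPijk P d0 b obs T0 T1 (th n)) at_top sequentially"
proof -
  define D where "D = (\<lambda>s p. setdist (b s p) obs)"
  define K where "K = {0..T} \<times> closure Theta"
  have cK: "compact K" unfolding K_def
    using A2 by (intro compact_Times) (auto simp: compact_closure)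
  have "compact (Dd ` K)"
    using cK A1_cont A1_dom K_def by (metis compact_continuous_image continuous_on_subset)
  then obtain B where B: "\<And>z. z \<in> K \<Longrightarrow> norm (Dd z) \<le> B"
    using compact_imp_bounded bounded_iff by (metis image_eqI)
  define L where "L = max B 0"
  have L0: "L \<ge> 0" unfolding L_def by simp
  have lip: "\<bar>D s p - D s' p\<bar> \<le> L * \<bar>s - s'\<bar>"
    if p: "p \<in> Theta" and s: "s \<in> {0..T}" and s': "s' \<in> {0..T}" for s s' p
  proof -
    let ?S = "{0..T} \<times> {p}"
    have sub: "?S \<subseteq> U" using A1_dom p closure_subset by auto
    have "norm ((\<lambda>(s, p). setdist (b s p) obs) (s, p) - (\<lambda>(s, p). setdist (b s p) obs) (s', p))
          \<le> L * norm ((s, p) - (s', p))"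
    proof (rule differentiable_bound[where f' = "\<lambda>z. blinfun_apply (Dd z)"])
      show "convex ?S" by (intro convex_Times) auto
      show "((\<lambda>(s, p). setdist (b s p) obs) has_derivative blinfun_apply (Dd x)) (at x within ?S)"
        if "x \<in> ?S" for x
        using A1_deriv[of x] sub that has_derivative_at_withinI by blast
      show "onorm (blinfun_apply (Dd x)) \<le> L" if "x \<in> ?S" for x
      proof -
        have "x \<in> K" using that p closure_subset unfolding K_def by auto
        then show ?thesis using B[of x] by (simp add: norm_blinfun.rep_eq[symmetric] L_def)
      qed
    qed (use s s' in auto)
    then show ?thesis by (simp add: D_def)
  qed
  have P: "penalty_assm P" by (rule A3)
  have Pmono: "\<And>x y. 0 < x \<Longrightarrow> x \<le> y \<Longrightarrow> P y \<le> P x"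
    and P0: "(P \<longlongrightarrow> 0) at_top" and xP: "filterlim (\<lambda>x. x * P x) at_top (at_right 0)"
    using P unfolding penalty_assm_def by auto
  have Pnn: "0 \<le> P y" if "y > 0" for y
  proof (rule tendsto_upperbound[OF P0])
    show "eventually (\<lambda>z. P y \<ge> P z) at_top"
      using eventually_ge_at_top[of y] by eventually_elim (use that Pmono in auto)
  qed simp
  define del where "del n = D (t n) (th n) - d0" for n
  have delpos: "del n > 0" for n
    using th_def[of n] t_in[of n] unfolding barPijk_defined_def del_def D_def by auto
  have del0: "del \<longlonglongrightarrow> 0"
    using tendsto_diff[OF lim tendsto_const[of d0]] unfolding del_def D_def by simp
  define x where "x n = (1 + L) * del n" for n
  have x0: "filterlim x (at_right 0) sequentially"
  proof (rule tendsto_imp_filterlim_at_right)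
    show "x \<longlonglongrightarrow> 0" using tendsto_mult[OF tendsto_const[of "1+L"] del0] unfolding x_def by simp
    show "eventually (\<lambda>n. x n > 0) sequentially" using delpos L0 unfolding x_def by simp
  qed
  have lowlim: "filterlim (\<lambda>n. inverse (1 + L) * (x n * P (x n))) at_top sequentially"
    using filterlim_tendsto_pos_mult_at_top[OF tendsto_const[of "inverse (1+L)"] _
        filterlim_compose[OF xP x0]] L0 by simp
  have ev: "eventually (\<lambda>n. del n \<le> T1 - T0) sequentially"
    using del0 T01 unfolding tendsto_iff
    by (auto elim!: allE[of _ "T1 - T0"] elim: eventually_mono simp: dist_real_def)
  have "eventually (\<lambda>n. inverse (1 + L) * (x n * P (x n)) \<le> barPijk P d0 b obs T0 T1 (th n)) sequentially"
    using ev
  proof eventually_elim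
    case (elim n)
    define h where "h = del n"
    define a where "a = min (t n) (T1 - h)"
    let ?f = "\<lambda>s. Pijk P d0 b obs s (th n)"
    have tn: "T0 \<le> t n" "t n \<le> T1" using t_in[of n] by auto
    have hpos: "h > 0" using delpos h_def by simp
    have sub: "{a..a+h} \<subseteq> {T0..T1}" using tn elim unfolding a_def h_def by auto
    have intf: "?f integrable_on {T0..T1}" using th_def[of n] unfolding barPijk_defined_def by simp
    have fpos: "0 \<le> ?f s" if "s \<in> {T0..T1}" for s
      using th_def[of n] that unfolding barPijk_defined_def Pijk_def by (auto intro!: Pnn)
    have bound: "P (x n) \<le> ?f s" if s: "s \<in> {a..a+h}" for s
    proof -
      have sT: "s \<in> {T0..T1}" using sub s by auto
      have "\<bar>D s (th n) - D (t n) (th n)\<bar> \<le> L * \<bar>s - t n\<bar>"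
        using lip[of "th n" s "t n"] th_dom sT tn T01 by auto
      moreover have "\<bar>s - t n\<bar> \<le> h" using s tn unfolding a_def by auto
      ultimately have "\<bar>D s (th n) - D (t n) (th n)\<bar> \<le> L * h"
        using L0 by (meson mult_left_mono order_trans)
      then have le: "D s (th n) - d0 \<le> x n"
        unfolding x_def h_def del_def by (simp add: algebra_simps)
      have "0 < D s (th n) - d0"
        using th_def[of n] sT unfolding barPijk_defined_def D_def by auto
      then show ?thesis using Pmono[OF _ le] unfolding Pijk_def D_def by simp
    qed
    have "x n * P (x n) = (1 + L) * (h * P (x n))" unfolding x_def h_def by simp
    moreover have "h * P (x n) = integral {a..a+h} (\<lambda>s. P (x n))"
      using hpos by simp
    moreover have "integral {a..a+h} (\<lambda>s. P (x n)) \<le> integral {a..a+h} ?f"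
      using bound integrable_on_subinterval[OF intf sub] by (intro integral_le) auto
    moreover have "integral {a..a+h} ?f \<le> integral {T0..T1} ?f"
      using integral_subset_le[OF sub integrable_on_subinterval[OF intf sub] intf] fpos by auto
    ultimately have "x n * P (x n) \<le> (1 + L) * integral {T0..T1} ?f"
    proof -
      assume e1: "x n * P (x n) = (1 + L) * (h * P (x n))"
        and e2: "h * P (x n) = integral {a..a+h} (\<lambda>s. P (x n))"
        and e3: "integral {a..a+h} (\<lambda>s. P (x n)) \<le> integral {a..a+h} ?f"
        and e4: "integral {a..a+h} ?f \<le> integral {T0..T1} ?f"
      have "h * P (x n) \<le> integral {T0..T1} ?f" using e2 e3 e4 by linarith
      then have "(1 + L) * (h * P (x n)) \<le> (1 + L) * integral {T0..T1} ?f"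
        using L0 by (intro mult_left_mono) auto
      then show ?thesis by (subst e1)
    qed
    then show ?case using L0 unfolding barPijk_def by (simp add: field_simps)
  qed
  then show ?thesis by (rule filterlim_at_top_mono[OF lowlim])
qed

end
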